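(* Let $n\ge2$ be an integer. (i) For every integer $T$ with $1\le T\le\lfloor n/2\rfloor$, there exists a nonempty open subinterval $I=I(T)$ of $(1/n,n)$ such that for all $\lambda\in I$ $$\widehat\lambda_{n,T}(\lambda)>\frac1n \quad\text{and}\quad \lambda_{n,T+2}(\lambda)<\frac1n .$$ (ii) For every integer $T$ with $\lfloor n/2\rfloor<T\le n+1$, we have $\widehat\lambda_{n,T}(\lambda)=\lambda_{n,T+1}(\lambda)<1/n$ for all $\lambda\in(1/n,\infty]$.
   Context: For an integer $n\ge1$ let $f_n(x)=(1+x)^{n+1}/x$ for $x>0$. The function $f_n$ is strictly decreasing on $(0,1/n]$ and strictly increasing on $[1/n,\infty)$. Regular graph exponents (Schmidt–Summerer), defined algebraically. For $\lambda\in[1/n,\infty)$ let $\mu\in(0,1/n]$ be the unique solution of $f_n(\mu)=f_n(\lambda)$, and set $$\lambda_{n,j}(\lambda)=\lambda^{1-\frac{j-1}{n+1}}\mu^{\frac{j-1}{n+1}},\qquad 1\le j\le n+2 .$$ All ratios $\lambda_{n,j}/\lambda_{n,j+1}$ are equal. For $\lambda=\infty$ put $\lambda_{n,1}=\infty$, $\lambda_{n,2}=1$ and $\lambda_{n,j}=0$ for $j\ge3$. Put $\widehat\lambda_{n,j}(\lambda):=\lambda_{n,j+1}(\lambda)$ for $1\le j\le n+1$. These are the exponents $\lambda_{n,j},\widehat\lambda_{n,j}$ of the regular graph in dimension $n$ with parameter $\lambda_n=\lambda$. (In terms of Diophantine approximation: by $\overline\psi_{n,T}<0\iff\widehat\lambda_{n,T}>1/n$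 and $\underline\psi_{n,T+2}>0\iff\lambda_{n,T+2}<1/n$, part (i) gives vectors inducing the regular graph whose $T$-th successive minimum function tends to $-\infty$ and whose $(T+2)$-nd tends to $+\infty$; this is Schmidt's property.) *)

theory Defs
  imports Complex_Main "HOL-Library.Extended_Real"
begin

definition fn_reg :: "nat \<Rightarrow> real \<Rightarrow> real" where
  "fn_reg n x = (1 + x) ^ (n + 1) / x"

definition mu_reg :: "nat \<Rightarrow> real \<Rightarrow> real" where
  "mu_reg n l = (THE m. 0 < m \<and> m \<le> 1 / real n \<and> fn_reg n m = fn_reg n l)"

text \<open>Regular graph exponents lambda_{n,j}(lambda), 1 <= j <= n+2, with lambda in [1/n, infinity]
  (infinity encoded via extended reals).\<close>
definition lam_reg :: "nat \<Rightarrow> nat \<Rightarrow> ereal \<Rightarrow> ereal" where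
  "lam_reg n j L =
     (if L = \<infinity> then (if j = 1 then \<infinity> else if j = 2 then 1 else 0)
      else ereal ((real_of_ereal L) powr (1 - (real j - 1) / (real n + 1))
                  * (mu_reg n (real_of_ereal L)) powr ((real j - 1) / (real n + 1))))"

definition lamhat_reg :: "nat \<Rightarrow> nat \<Rightarrow> ereal \<Rightarrow> ereal" where
  "lamhat_reg n j L = lam_reg n (j + 1) L"

end

theory Submission imports Defs begin

definition Sv :: "nat \<Rightarrow> real \<Rightarrow> real" where "Sv n v = (\<Sum>i<n. v^(Suc i))"

lemma Sv_tele: "Sv n v * (v - 1) = v^(n+1) - v"
  by (induction n) (auto simp: Sv_def algebra_simps)

lemma Sv_pos: "0 < v \<Longrightarrow> 1 \<le> n \<Longrightarrow> Sv n v > 0"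
  unfolding Sv_def by (intro sum_pos) (auto simp: lessThan_empty_iff)

lemma Sv_ge_v: assumes "0 < v" "1 \<le> n" shows "Sv n v \<ge> v"
proof -
  have "v = (\<Sum>i\<in>{0}. v^(Suc i))" by simp
  also have "\<dots> \<le> Sv n v" unfolding Sv_def
    by (rule sum_mono2) (use assms in auto)
  finally show ?thesis .
qed

lemma Sv_lt_n: assumes "0 < v" "v < 1" "1 \<le> n" shows "Sv n v < real n"
proof -
  have "Sv n v < (\<Sum>i<n. 1)" unfolding Sv_def
    by (rule sum_strict_mono) (use assms in \<open>auto simp: lessThan_empty_iff simp del: power_Suc intro!: power_Suc_less_one\<close>)
  then show ?thesis by simp
qed

lemma Sv_ge_last: assumes "0 < v" "v < 1" shows "real n * v^(n+1) \<le> Sv n v"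
proof -
  have "(\<Sum>i<n. v^(n+1)) \<le> Sv n v" unfolding Sv_def
    by (rule sum_mono) (use assms in \<open>auto intro: power_decreasing\<close>)
  then show ?thesis by simp
qed

lemma Sv_mono: assumes "0 \<le> x" "x < y" "1 \<le> n" shows "Sv n x < Sv n y"
  unfolding Sv_def
  by (rule sum_strict_mono) (use assms in \<open>auto simp: lessThan_empty_iff simp del: power_Suc intro!: power_strict_mono\<close>)

lemma Sv_cont: "continuous_on A (Sv n)"
  unfolding Sv_def by (intro continuous_intros)

lemma fn_dec:
  assumes "0 < x" "x < y" "y \<le> 1 / real n" "1 \<le> n"
  shows "fn_reg n y < fn_reg n x"
proof -
  have "fn_reg n x > fn_reg n y"
  proof (rule DERIV_neg_imp_decreasing_open[OF assms(2)])
    fix z assume z: "x < z" "z < y"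
    have D: "((\<lambda>z. (1+z)^(n+1)/z) has_real_derivative
          ((real (n+1)) * (1+z)^n * z - (1+z)^(n+1)) / (z*z)) (at z)"
      using z assms
      by (auto intro!: derivative_eq_intros simp: power2_eq_square)
         (cases n, auto simp: algebra_simps)
    have "real n * z < real n * y" using z assms by simp
    also have "\<dots> \<le> 1" using assms by (simp add: field_simps)
    finally have "real n * z < 1" .
    then have "(real (n+1)) * (1+z)^n * z - (1+z)^(n+1) = (1+z)^n * (real n * z - 1)"
      by (simp add: algebra_simps)
    moreover have "(1+z)^n * (real n * z - 1) < 0"
      using \<open>real n * z < 1\<close> z assms by (intro mult_pos_neg) auto
    moreover have "z * z > 0" using z assms by simp
    ultimately have "((real (n+1)) * (1+z)^n * z - (1+z)^(n+1)) / (z*z) < 0"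
      by (simp add: divide_neg_pos)
    then show "\<exists>d. DERIV (fn_reg n) z :> d \<and> d < 0"
      using D unfolding fn_reg_def[abs_def] by blast
  next
    show "continuous_on {x..y} (fn_reg n)" unfolding fn_reg_def[abs_def]
      using assms by (intro continuous_intros) auto
  qed
  then show ?thesis .
qed

lemma mu_param:
  assumes v: "0 < v" "v < 1" and n: "1 \<le> n" and l: "l = 1 / Sv n v"
  shows "mu_reg n l = l * v^(n+1)"
proof -
  define S where "S = Sv n v"
  have S: "S > 0" using Sv_pos v n S_def by auto
  define m where "m = l * v^(n+1)"
  have tele: "S * (v - 1) = v^(n+1) - v" using Sv_tele S_def by simp
  have m_eq: "m = v^(n+1) / S" using l S_def m_def by simp
  have lpos: "l > 0" using l S S_def by simp
  have mpos: "m > 0" using m_def lpos v by simp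
  have "1 + m = v * (1 + l)"
    using tele S unfolding m_eq l S_def[symmetric] by (simp add: field_simps)
  then have fm: "fn_reg n m = fn_reg n l"
    unfolding fn_reg_def using lpos v by (simp add: m_def power_mult_distrib)
  have "real n * v^(n+1) \<le> S" using Sv_ge_last v S_def by simp
  then have mle: "m \<le> 1 / real n" using S n unfolding m_eq by (simp add: field_simps)
  show ?thesis unfolding mu_reg_def m_def[symmetric]
  proof (rule the_equality)
    show "0 < m \<and> m \<le> 1 / real n \<and> fn_reg n m = fn_reg n l" using mpos mle fm by simp
  next
    fix m' assume h: "0 < m' \<and> m' \<le> 1 / real n \<and> fn_reg n m' = fn_reg n l"
    show "m' = m"
    proof (rule ccontr)
      assume "m' \<noteq> m"
      then consider "m' < m" | "m < m'" by linarith
      then show False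
      proof cases
        case 1 then have "fn_reg n m < fn_reg n m'" using fn_dec[of m' m n] h mle n by simp
        then show False using h fm by simp
      next
        case 2 then have "fn_reg n m' < fn_reg n m" using fn_dec[of m m' n] h mpos n by simp
        then show False using h fm by simp
      qed
    qed
  qed
qed

lemma lam_param:
  assumes v: "0 < v" "v < 1" and n: "1 \<le> n" and l: "l = 1 / Sv n v"
  shows "lam_reg n j (ereal l) = ereal (l * v powr (real j - 1))"
proof -
  have lpos: "l > 0" using l Sv_pos v n by simp
  define t where "t = (real j - 1) / (real n + 1)"
  have "(l * v^(n+1)) powr t = l powr t * (v powr (real n + 1)) powr t"
  proof -
    have "v^(n+1) = v powr (real n + 1)" using v powr_realpow[of v "n+1"] by (simp add: add.commute)
    then show ?thesis using lpos v by (simp add: powr_mult)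
  qed
  also have "\<dots> = l powr t * v powr (real j - 1)"
    by (simp add: powr_powr t_def)
  finally have e: "(l * v^(n+1)) powr t = l powr t * v powr (real j - 1)" .
  have "l powr (1 - t) * (l * v^(n+1)) powr t = (l powr (1 - t) * l powr t) * v powr (real j - 1)"
    unfolding e by simp
  also have "l powr (1 - t) * l powr t = l"
    using lpos by (simp add: powr_add[symmetric])
  finally show ?thesis
    unfolding lam_reg_def using mu_param[OF v n l] by (simp add: t_def)
qed

lemma surj_param:
  assumes n: "1 \<le> n" and l: "l > 1 / real n"
  shows "\<exists>v. 0 < v \<and> v < 1 \<and> l = 1 / Sv n v"
proof -
  have lpos: "l > 0" using l n by (smt (verit) of_nat_0_le_iff divide_nonneg_nonneg)
  have "1 / l < real n" using l lpos n by (simp add: field_simps)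
  have S0: "Sv n 0 = 0" by (simp add: Sv_def)
  have S1: "Sv n 1 = real n" by (simp add: Sv_def)
  obtain v where v: "0 \<le> v" "v \<le> 1" "Sv n v = 1 / l"
    using IVT'[of "Sv n" 0 "1/l" 1] S0 S1 \<open>1 / l < real n\<close> lpos Sv_cont by force
  have "v \<noteq> 0" using v S0 lpos by auto
  moreover have "v \<noteq> 1" using v S1 \<open>1 / l < real n\<close> by auto
  ultimately show ?thesis using v lpos by (intro exI[of _ v]) auto
qed

lemma pair_bound:
  fixes v :: real and a b T :: nat
  assumes v: "0 < v" "v < 1" and ab: "a + b \<le> 2 * T"
  shows "2 * v^T \<le> v^a + v^b" and "v^a \<noteq> v^b \<Longrightarrow> 2 * v^T < v^a + v^b"
proof -
  have "v^(2*T) \<le> v^(a+b)" using v ab by (intro power_decreasing) auto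
  then have h: "(2 * v^T)^2 \<le> 4 * (v^a * v^b)"
    by (simp add: power_mult_distrib power_add power_mult[symmetric] mult.commute)
  have sq: "(v^a + v^b)^2 = (v^a - v^b)^2 + 4 * (v^a * v^b)" by (simp add: power2_eq_square algebra_simps)
  have "(2 * v^T)^2 \<le> (v^a + v^b)^2" using h sq by (smt (verit) zero_le_power2)
  have nn: "0 \<le> v^a + v^b" using v by simp
  then show "2 * v^T \<le> v^a + v^b" using power2_le_imp_le[OF \<open>(2 * v^T)^2 \<le> (v^a + v^b)^2\<close> nn] by simp
  assume "v^a \<noteq> v^b"
  then have "(v^a - v^b)^2 > 0" by simp
  then have "(2 * v^T)^2 < (v^a + v^b)^2" using h sq by linarith
  then show "2 * v^T < v^a + v^b" using power_less_imp_less_base[of _ 2] nn by blast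
qed

lemma part2_ineq:
  assumes v: "0 < v" "v < 1" and n: "2 \<le> n" and T: "n div 2 < T"
  shows "real n * v^T < Sv n v"
proof -
  have T2: "n + 1 \<le> 2 * T" using T by linarith
  have "Sv n v = (\<Sum>i<n. v^(Suc (n - Suc i)))" unfolding Sv_def by (rule sum.nat_diff_reindex[symmetric])
  also have "\<dots> = (\<Sum>i<n. v^(n - i))" by (intro sum.cong) (auto simp: Suc_diff_Suc)
  finally have r: "Sv n v = (\<Sum>i<n. v^(n - i))" .
  have "(\<Sum>i<n. 2 * v^T) < (\<Sum>i<n. v^(Suc i) + v^(n - i))"
  proof (rule sum_strict_mono_ex1)
    show "\<forall>i\<in>{..<n}. 2 * v^T \<le> v^(Suc i) + v^(n - i)"
    proof
      fix i assume i: "i \<in> {..<n}"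
      show "2 * v^T \<le> v^(Suc i) + v^(n - i)"
        by (rule pair_bound(1)[OF v]) (use T2 i in auto)
    qed
    have "v^(Suc 0) \<noteq> v^(n - 0)"
    proof
      assume "v^(Suc 0) = v^(n - 0)"
      moreover have "v^n < v^1" using v n by (intro power_strict_decreasing) auto
      ultimately show False by simp
    qed
    then have "2 * v^T < v^(Suc 0) + v^(n - 0)" by (rule pair_bound(2)[OF v, rotated]) (use T2 in simp)
    then show "\<exists>i\<in>{..<n}. 2 * v^T < v^(Suc i) + v^(n - i)" using n by (intro bexI[of _ 0]) auto
  qed simp
  also have "\<dots> = 2 * Sv n v" using r by (simp add: sum.distrib Sv_def)
  finally show ?thesis by simp
qed

lemma nbhd:
  fixes n T :: nat and v0 :: real
  assumes "1 / real n < v0" "v0 < 1" "Sv n v0 < real n * v0^T" "real n * v0^(T+1) < Sv n v0"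
  shows "\<exists>va vb. 1 / real n < va \<and> va < vb \<and> vb < 1 \<and>
     (\<forall>v. va \<le> v \<and> v \<le> vb \<longrightarrow> Sv n v < real n * v^T \<and> real n * v^(T+1) < Sv n v)"
proof -
  define U where "U = {v. Sv n v < real n * v^T} \<inter> {v. real n * v^(T+1) < Sv n v}
      \<inter> {v. 1 / real n < v} \<inter> {v. v < (1::real)}"
  have c: "continuous_on UNIV (Sv n)" by (rule Sv_cont)
  have "open U" unfolding U_def
    by (intro open_Int open_Collect_less continuous_intros c)
  moreover have "v0 \<in> U" using assms unfolding U_def by auto
  ultimately obtain e where e: "e > 0" "\<And>y. dist y v0 < e \<Longrightarrow> y \<in> U"
    unfolding open_dist by blast
  have sub: "\<And>v. v0 - e/2 \<le> v \<Longrightarrow> v \<le> v0 + e/2 \<Longrightarrow> v \<in> U"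
    using e by (intro e(2)) (auto simp: dist_real_def abs_if)
  have "v0 - e/2 \<in> U" "v0 + e/2 \<in> U" using sub e by auto
  then show ?thesis using sub e unfolding U_def
    by (intro exI[of _ "v0 - e/2"] exI[of _ "v0 + e/2"]) auto
qed

lemma interval_from_v:
  fixes n T :: nat
  assumes n: "1 \<le> n" and va: "1 / real n < va" and vab: "va < vb" and vb: "vb < 1"
    and cond: "\<forall>v. va \<le> v \<and> v \<le> vb \<longrightarrow> Sv n v < real n * v^T \<and> real n * v^(T+1) < Sv n v"
  shows "\<exists>a b::real. 1 / real n \<le> a \<and> a < b \<and> b \<le> real n \<and>
               (\<forall>l\<in>{a<..<b}. lamhat_reg n T (ereal l) > ereal (1 / real n) \<and>
                              lam_reg n (T + 2) (ereal l) < ereal (1 / real n))"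
proof -
  have vapos: "va > 0" using va n by (smt (verit) of_nat_0_le_iff divide_nonneg_nonneg)
  have Sa: "Sv n va > 0" using Sv_pos vapos n by simp
  have Sab: "Sv n va < Sv n vb" using Sv_mono vapos vab n by simp
  have Sb: "Sv n vb < real n" using Sv_lt_n vapos vab vb n by simp
  have Sag: "Sv n va \<ge> va" using Sv_ge_v vapos n by simp
  have A1: "1 / real n \<le> 1 / Sv n vb" using Sb Sa Sab n by (simp add: frac_le)
  have A2: "1 / Sv n vb < 1 / Sv n va" using Sa Sab by (simp add: frac_less2)
  have "1 / real n < Sv n va" using va Sag by simp
  then have A3: "1 / Sv n va \<le> real n" using Sa n by (simp add: field_simps)
  have A4: "\<forall>l\<in>{1 / Sv n vb<..<1 / Sv n va}. lamhat_reg n T (ereal l) > ereal (1 / real n) \<and>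
                              lam_reg n (T + 2) (ereal l) < ereal (1 / real n)"
  proof
    fix l assume l: "l \<in> {1 / Sv n vb<..<1 / Sv n va}"
    have lpos: "l > 0" using l Sa Sab by (smt (verit) greaterThanLessThan_iff divide_pos_pos)
    have "Sv n va < 1 / l" "1 / l < Sv n vb" using l lpos Sa Sab by (auto simp: field_simps)
    then obtain v where v: "va \<le> v" "v \<le> vb" "Sv n v = 1 / l"
      using IVT'[of "Sv n" va "1/l" vb] vab Sv_cont by force
    have v01: "0 < v" "v < 1" using v vapos vb by auto
    have leq: "l = 1 / Sv n v" using v lpos by simp
    have Sv: "Sv n v > 0" using Sv_pos v01 n by simp
    have c: "Sv n v < real n * v^T" "real n * v^(T+1) < Sv n v" using cond v by auto
    have L1: "lamhat_reg n T (ereal l) = ereal (l * v^T)"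
      unfolding lamhat_reg_def using lam_param[OF v01 n leq, of "T+1"] v01 by (simp add: powr_realpow)
    have L2: "lam_reg n (T+2) (ereal l) = ereal (l * v^(T+1))"
      using lam_param[OF v01 n leq, of "T+2"] v01 by (simp add: powr_add powr_realpow)
    have "1 / real n < l * v^T" using c(1) Sv n unfolding leq by (simp add: field_simps)
    moreover have "l * v^(T+1) < 1 / real n" using c(2) Sv n unfolding leq by (simp add: field_simps)
    ultimately show "ereal (1 / real n) < lamhat_reg n T (ereal l) \<and>
                     lam_reg n (T + 2) (ereal l) < ereal (1 / real n)"
      unfolding L1 L2 by simp
  qed
  show ?thesis using A1 A2 A3 A4 by blast
qed

lemma gauss_real: "(\<Sum>i<n. real (Suc i)) = real n * (real n + 1) / 2"
  by (induction n) (auto simp: field_simps)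

lemma v0_T1:
  assumes n: "2 \<le> n"
  shows "\<exists>v0. 1 / real n < v0 \<and> v0 < 1 \<and> Sv n v0 < real n * v0^1 \<and> real n * v0^(1+1) < Sv n v0"
proof -
  define v where "v = 2 / (2 * real n - 1)"
  have n2: "real n \<ge> 2" using n by simp
  have vpos: "v > 0" using n2 by (simp add: v_def)
  have v1: "v < 1" using n2 by (simp add: v_def field_simps)
  have vn: "1 / real n < v" using n2 by (simp add: v_def field_simps)
  have "Sv n v < (\<Sum>i<n. v)" unfolding Sv_def
  proof (rule sum_strict_mono_ex1)
    show "\<forall>i\<in>{..<n}. v ^ Suc i \<le> v"
      using vpos v1 by (auto intro: power_le_one simp del: power_Suc simp: power_Suc[of v])
    have "v^(Suc 1) < v" using vpos v1 by (simp add: power2_eq_square)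
    then show "\<exists>i\<in>{..<n}. v ^ Suc i < v" using n by (intro bexI[of _ 1]) auto
  qed simp
  then have c1: "Sv n v < real n * v^1" by simp
  have "(\<Sum>i\<in>{0,1}. v^(Suc i)) \<le> Sv n v" unfolding Sv_def
    by (rule sum_mono2) (use n vpos in auto)
  then have s2: "v + v^2 \<le> Sv n v" by (simp add: power2_eq_square)
  have "(real n - 1) * v < 1" using n2 by (simp add: v_def field_simps)
  then have "v * ((real n - 1) * v) < v * 1" using vpos by (rule mult_strict_left_mono)
  then have "real n * v^2 < v + v^2" by (simp add: power2_eq_square algebra_simps)
  then have c2': "real n * v^2 < Sv n v" using s2 by linarith
  then have c2: "real n * v^(1+1) < Sv n v" by (simp add: power2_eq_square)
  show ?thesis using vn v1 c1 c2 by blast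
qed

lemma v0_T2:
  assumes n: "2 \<le> n" and T: "2 \<le> T" "T \<le> n div 2"
  shows "\<exists>v0. 1 / real n < v0 \<and> v0 < 1 \<and> Sv n v0 < real n * v0^T \<and> real n * v0^(T+1) < Sv n v0"
proof -
  define \<phi> where "\<phi> = (\<lambda>v. Sv n v - real n * v^T * (3/4 + v/4))"
  have n1: "1 \<le> n" using n by simp
  have Tn: "2 * real T \<le> real n" using T by linarith
  have DS: "DERIV (Sv n) 1 :> (\<Sum>i<n. real (Suc i))"
    unfolding Sv_def[abs_def]
  proof (rule DERIV_sum)
    fix i show "((\<lambda>x. x ^ Suc i) has_field_derivative real (Suc i)) (at 1)"
      using DERIV_pow[of "Suc i" 1] by simp
  qed
  have D2: "DERIV (\<lambda>v. real n * v^T * (3/4 + v/4)) 1 :> real n * (real T + 1/4)"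
    by (auto intro!: derivative_eq_intros simp: field_simps)
  have D: "DERIV \<phi> 1 :> (\<Sum>i<n. real (Suc i)) - real n * (real T + 1/4)"
    unfolding \<phi>_def by (rule DERIV_diff[OF DS D2])
  have pos: "(\<Sum>i<n. real (Suc i)) - real n * (real T + 1/4) > 0"
  proof -
    have "real n * (real T + 1/4) \<le> real n * (real n / 2 + 1/4)"
      using Tn by (intro mult_left_mono) auto
    moreover have "real n * (real n / 2 + 1/4) < real n * (real n + 1) / 2"
      using n by (simp add: field_simps)
    ultimately show ?thesis unfolding gauss_real by linarith
  qed
  have phi1: "\<phi> 1 = 0" by (simp add: \<phi>_def Sv_def)
  obtain d where d: "d > 0" "\<And>h. h > 0 \<Longrightarrow> h < d \<Longrightarrow> \<phi> (1 - h) < \<phi> 1"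
    using DERIV_pos_inc_left[OF D pos] by blast
  define h where "h = min (d/2) ((1 - 1 / real n)/2)"
  have n2: "real n \<ge> 2" using n by simp
  have hpos: "h > 0" using d n2 by (simp add: h_def field_simps)
  have "h < d" using d by (simp add: h_def)
  then have phv1: "\<phi> (1 - h) < 0" using d(2)[OF hpos] phi1 by simp
  have hle: "h \<le> (1 - 1 / real n)/2" unfolding h_def by (rule min.cobounded2)
  have "1 / real n \<le> 1/2" using n2 by (simp add: field_simps)
  moreover have "\<And>x h::real. x \<le> 1/2 \<Longrightarrow> h \<le> (1-x)/2 \<Longrightarrow> x < 1 - h" by (auto simp: field_simps)
  ultimately have v1n: "1 / real n < 1 - h" using hle by blast
  have v1: "1 - h < 1" using hpos by simp
  have invn: "0 < 1 / real n" "1 / real n \<le> 1" using n2 by auto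
  have "(1 / real n)^T \<le> (1 / real n)^2" using invn T by (intro power_decreasing) auto
  then have "real n * (1 / real n)^T \<le> real n * (1 / real n)^2" using n2 by simp
  also have "\<dots> = 1 / real n" using n2 by (simp add: power2_eq_square)
  finally have a: "real n * (1 / real n)^T \<le> 1 / real n" .
  have fac: "3/4 + (1 / real n) / 4 < 1" using n2 by (simp add: field_simps)
  have "real n * (1 / real n)^T * (3/4 + (1 / real n)/4) < 1 / real n"
  proof -
    have "real n * (1 / real n)^T > 0" using n2 by simp
    then have "real n * (1 / real n)^T * (3/4 + (1 / real n)/4) < real n * (1 / real n)^T * 1"
      using fac by (intro mult_strict_left_mono) auto
    then show ?thesis using a by simp
  qed
  moreover have "Sv n (1 / real n) \<ge> 1 / real n" using Sv_ge_v invn n1 by simp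
  ultimately have phn: "\<phi> (1 / real n) > 0" unfolding \<phi>_def by linarith
  have cont: "continuous_on {1 / real n .. 1 - h} \<phi>" unfolding \<phi>_def
    by (intro continuous_intros Sv_cont) auto
  obtain v0 where v0: "1 / real n \<le> v0" "v0 \<le> 1 - h" "\<phi> v0 = 0"
    using IVT2'[of \<phi> "1 - h" 0 "1 / real n", OF _ _ _ cont] phv1 phn v1n by force
  have v0n: "1 / real n < v0" using v0 phn by (cases "v0 = 1 / real n") auto
  have v0pos: "v0 > 0" using v0n invn by linarith
  have v01: "v0 < 1" using v0 hpos by simp
  have S: "Sv n v0 = real n * v0^T * (3/4 + v0/4)" using v0(3) unfolding \<phi>_def by simp
  have P: "real n * v0^T > 0" using v0pos n2 by simp
  have "real n * v0^T * ((1 - v0)/4) > 0" using P v01 by simp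
  then have c1: "Sv n v0 < real n * v0^T" unfolding S by (simp add: algebra_simps)
  have "real n * v0^T * (3 * (1 - v0)/4) > 0" using P v01 by simp
  then have c2: "real n * v0^(T+1) < Sv n v0" unfolding S by (simp add: algebra_simps)
  show ?thesis using v0n v01 c1 c2 by blast
qed

theorem theorem2p7:
  fixes n :: nat
  assumes "n \<ge> 2"
  shows "(\<forall>T::nat. 1 \<le> T \<and> T \<le> n div 2 \<longrightarrow>
            (\<exists>a b::real. 1 / real n \<le> a \<and> a < b \<and> b \<le> real n \<and>
               (\<forall>l\<in>{a<..<b}. lamhat_reg n T (ereal l) > ereal (1 / real n) \<and>
                              lam_reg n (T + 2) (ereal l) < ereal (1 / real n))))
       \<and> (\<forall>T::nat. n div 2 < T \<and> T \<le> n + 1 \<longrightarrow>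
            (\<forall>L::ereal. L > ereal (1 / real n) \<longrightarrow>
               lamhat_reg n T L = lam_reg n (T + 1) L \<and> lam_reg n (T + 1) L < ereal (1 / real n)))"
proof (rule conjI; intro allI impI)
  have n1: "1 \<le> n" using assms by simp
  fix T :: nat assume T: "1 \<le> T \<and> T \<le> n div 2"
  obtain v0 where v0: "1 / real n < v0" "v0 < 1" "Sv n v0 < real n * v0^T" "real n * v0^(T+1) < Sv n v0"
  proof (cases "T = 1")
    case True then show ?thesis using v0_T1[OF assms] that by blast
  next
    case False then show ?thesis using v0_T2[OF assms, of T] T that by auto
  qed
  obtain va vb where vv: "1 / real n < va" "va < vb" "vb < 1"
    "\<forall>v. va \<le> v \<and> v \<le> vb \<longrightarrow> Sv n v < real n * v^T \<and> real n * v^(T+1) < Sv n v"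
    using nbhd[OF v0] by blast
  show "\<exists>a b::real. 1 / real n \<le> a \<and> a < b \<and> b \<le> real n \<and>
               (\<forall>l\<in>{a<..<b}. lamhat_reg n T (ereal l) > ereal (1 / real n) \<and>
                              lam_reg n (T + 2) (ereal l) < ereal (1 / real n))"
    by (rule interval_from_v[OF n1 vv])
next
  have n1: "1 \<le> n" using assms by simp
  fix T :: nat and L :: ereal
  assume T: "n div 2 < T \<and> T \<le> n + 1" and L: "L > ereal (1 / real n)"
  have T2: "T \<ge> 2" using T assms by linarith
  have np: "ereal (1 / real n) > 0" using assms by simp
  show "lamhat_reg n T L = lam_reg n (T + 1) L \<and> lam_reg n (T + 1) L < ereal (1 / real n)"
  proof (cases L)
    case PInf
    have "lam_reg n (T + 1) L = 0" using T2 PInf by (simp add: lam_reg_def)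
    then show ?thesis using np by (simp add: lamhat_reg_def)
  next
    case MInf then show ?thesis using L by simp
  next
    case (real l)
    have l: "l > 1 / real n" using L real by simp
    obtain v where v: "0 < v" "v < 1" "l = 1 / Sv n v" using surj_param[OF n1 l] by blast
    have Sv: "Sv n v > 0" using Sv_pos v n1 by simp
    have "real n * v^T < Sv n v" using part2_ineq[OF v(1,2) assms] T by simp
    then have "l * v^T * real n < 1 / Sv n v * Sv n v" unfolding v(3) using Sv
      by (simp add: field_simps)
    then have "l * v^T < 1 / real n" using Sv n1 by (simp add: field_simps)
    moreover have "lam_reg n (T + 1) L = ereal (l * v^T)"
      using lam_param[OF v(1,2) n1 v(3), of "T+1"] v real by (simp add: powr_realpow)
    ultimately show ?thesis by (simp add: lamhat_reg_def)
  qed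
qed

end
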